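(* In the one-way trading setting with price elasticity, for every $\pi\ge1$, $$\Phi_\Delta(\pi)\ \le\ \bar\Phi(\pi):=\frac{2\Delta}{\pi\left(1+\sqrt{1-1/\pi}\right)}\,(\ln\theta+1),\qquad\theta=M/m.$$
   Context: Fix $\Delta>0$, $0<m\le M$, $\theta=M/m$. Let $\mathcal G_{PE}$ be the set of functions $g(v)=(p-f(v))\,v$ on $[0,\Delta]$, where $p\in[m,M]$ and $f:[0,\Delta]\to[0,\infty)$ is convex and differentiable with $f(0)=0$. An input is a finite sequence $\sigma=(g_1,\dots,g_T)$, $T\ge1$, with $g_t(v)=(p(t)-f_t(v))v\in\mathcal G_{PE}$; $\sigma^{[1:t]}=(g_1,\dots,g_t)$ ($\sigma^{[1:0]}$ empty). $\eta_{OPT}(\sigma^{[1:t]})$ is the optimal value of $\max\sum_{s=1}^t g_s(v_s)$ s.t. $\sum_{s=1}^t v_s\le\Delta$, $v_s\ge0$ (and $0$ for the empty sequence). For $\pi\ge1$, CR-Pursuit($\pi$) outputs at time $t$ the smallest $\bar v_t\in[0,\Delta]$ with $g_t(\bar v_t)=\frac1\pi\big[\eta_{OPT}(\sigma^{[1:t]})-\eta_{OPT}(\sigma^{[1:t-1]})\big]$. $\Phi_\Delta(\pi)$ is the supremum over all such inputs of $\sum_{t=1}^T\bar v_t$. *)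

theory Defs
  imports "HOL-Analysis.Analysis" "HOL-Library.Extended_Real"
begin

text \<open>A function g(v) = (p - f v) v belongs to G_PE (on [0,Delta], with prices in [m,M]).
  An element of G_PE is represented by its pair (p, f).\<close>
definition in_GPE :: "real \<Rightarrow> real \<Rightarrow> real \<Rightarrow> real \<Rightarrow> (real \<Rightarrow> real) \<Rightarrow> bool" where
  "in_GPE Delta m M p f \<longleftrightarrow>
     m \<le> p \<and> p \<le> M \<and> convex_on {0..Delta} f \<and> f differentiable_on {0..Delta} \<and>
     (\<forall>v\<in>{0..Delta}. 0 \<le> f v) \<and> f 0 = 0"

definition gfun :: "real \<times> (real \<Rightarrow> real) \<Rightarrow> real \<Rightarrow> real" where
  "gfun pf v = (fst pf - snd pf v) * v"

text \<open>Offline optimum of a (possibly empty) sequence; the s-th element of the list is g_(s+1).\<close>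
definition etaOPT :: "real \<Rightarrow> (real \<times> (real \<Rightarrow> real)) list \<Rightarrow> real" where
  "etaOPT Delta \<sigma> = Sup {(\<Sum>s<length \<sigma>. gfun (\<sigma> ! s) (x s)) | x.
       (\<forall>s<length \<sigma>. 0 \<le> x s) \<and> (\<Sum>s<length \<sigma>. x s) \<le> Delta}"

text \<open>Output of CR-Pursuit(pi) at time t (1-based, 1 \<le> t \<le> length sigma).\<close>
definition crp_out :: "real \<Rightarrow> real \<Rightarrow> (real \<times> (real \<Rightarrow> real)) list \<Rightarrow> nat \<Rightarrow> real" where
  "crp_out Delta ppi \<sigma> t =
     Inf {v \<in> {0..Delta}. gfun (\<sigma> ! (t - 1)) v =
        (etaOPT Delta (take t \<sigma>) - etaOPT Delta (take (t - 1) \<sigma>)) / ppi}"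

definition Phi :: "real \<Rightarrow> real \<Rightarrow> real \<Rightarrow> real \<Rightarrow> ereal" where
  "Phi Delta m M ppi = (SUP \<sigma> \<in> {\<sigma>. \<sigma> \<noteq> [] \<and> (\<forall>(p, f) \<in> set \<sigma>. in_GPE Delta m M p f)}.
      ereal (\<Sum>t=1..length \<sigma>. crp_out Delta ppi \<sigma> t))"

end

theory Submission imports Defs begin

lemma gpe_f_le:
  assumes "in_GPE D m M p f" "0 \<le> x" "x \<le> y" "y \<le> D" "0 < y"
  shows "f x \<le> (x/y) * f y"
proof -
  have cv: "convex_on {0..D} f" using assms(1) by (simp add: in_GPE_def)
  have f0: "f 0 = 0" using assms(1) by (simp add: in_GPE_def)
  have "f ((1 - x/y) *\<^sub>R 0 + (x/y) *\<^sub>R y) \<le> (1 - x/y) * f 0 + (x/y) * f y"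
    using convex_onD[OF cv, of "x/y" 0 y] assms by (auto simp: field_simps)
  moreover have "(1 - x/y) *\<^sub>R 0 + (x/y) *\<^sub>R y = x" using assms by simp
  ultimately show ?thesis using f0 by simp
qed

lemma gpe_mono:
  assumes "in_GPE D m M p f" "0 \<le> x" "x \<le> y" "y \<le> D"
  shows "f x \<le> f y"
proof (cases "y = 0")
  case True then show ?thesis using assms by simp
next
  case False
  have "f x \<le> (x/y) * f y" using gpe_f_le[OF assms] False assms by simp
  also have "\<dots> \<le> f y"
  proof -
    have "0 \<le> f y" using assms by (auto simp: in_GPE_def)
    moreover have "x/y \<le> 1" using assms False by simp
    ultimately have "(x/y) * f y \<le> 1 * f y" by (intro mult_right_mono) auto
    then show ?thesis by simp
  qed
  finally show ?thesis .
qed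

lemma gpe_concave:
  assumes "in_GPE D m M p f" "x \<in> {0..D}" "y \<in> {0..D}" "0 \<le> l" "l \<le> 1"
  shows "(1-l) * gfun (p,f) x + l * gfun (p,f) y \<le> gfun (p,f) ((1-l)*x + l*y)"
proof -
  define v where "v = (1-l)*x + l*y"
  have cv: "convex_on {0..D} f" using assms(1) by (simp add: in_GPE_def)
  have fv: "f v \<le> (1-l) * f x + l * f y"
    using convex_onD[OF cv, of l x y] assms by (simp add: v_def)
  have v0: "0 \<le> v" using assms by (simp add: v_def)
  have md: "0 \<le> (x - y) * (f x - f y)"
  proof (cases "x \<le> y")
    case True
    then have "f x \<le> f y" using gpe_mono[OF assms(1)] assms by auto
    then show ?thesis using True by (simp add: mult_nonpos_nonpos)
  next
    case False
    then have "f y \<le> f x" using gpe_mono[OF assms(1)] assms by auto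
    then show ?thesis using False by simp
  qed
  have "v * f v \<le> v * ((1-l) * f x + l * f y)" using fv v0 by (simp add: mult_left_mono)
  also have "\<dots> = (1-l)*x*f x + l*y*f y - l*(1-l)*((x - y) * (f x - f y))"
    by (simp add: v_def algebra_simps)
  also have "\<dots> \<le> (1-l)*x*f x + l*y*f y" using md assms by simp
  finally have "v * f v \<le> (1-l)*x*f x + l*y*f y" .
  then show ?thesis unfolding gfun_def v_def[symmetric]
    by (simp add: v_def algebra_simps)
qed

lemma gpe_le:
  assumes "in_GPE D m M p f" "v \<in> {0..D}"
  shows "gfun (p,f) v \<le> p * v"
proof -
  have "0 \<le> f v" using assms by (auto simp: in_GPE_def)
  then show ?thesis using assms by (simp add: gfun_def algebra_simps)
qed

lemma gpe_cont:
  assumes "in_GPE D m M p f"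
  shows "continuous_on {0..D} (gfun (p,f))"
proof -
  have "continuous_on {0..D} f" using assms differentiable_imp_continuous_on
    by (auto simp: in_GPE_def)
  then show ?thesis unfolding gfun_def by (auto intro!: continuous_intros)
qed

lemma gpe_0: "gfun (p,f) 0 = 0" by (simp add: gfun_def)


locale crp =
  fixes D m M :: real and \<sigma> :: "(real \<times> (real \<Rightarrow> real)) list"
  assumes Dpos: "0 < D" and mpos: "0 < m" and mM: "m \<le> M"
    and gpe: "\<forall>(p,f)\<in>set \<sigma>. in_GPE D m M p f"
begin

abbreviation "T \<equiv> length \<sigma>"

lemma gpe_nth: "s < T \<Longrightarrow> in_GPE D m M (fst (\<sigma>!s)) (snd (\<sigma>!s))"
  using gpe nth_mem[of s \<sigma>] by (cases "\<sigma>!s") auto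

lemma G_eq: "gfun (\<sigma>!s) = gfun (fst (\<sigma>!s), snd (\<sigma>!s))" by simp

definition feas :: "nat set \<Rightarrow> (nat \<Rightarrow> real) \<Rightarrow> bool" where
  "feas I x \<longleftrightarrow> (\<forall>s\<in>I. 0 \<le> x s) \<and> (\<Sum>s\<in>I. x s) \<le> D"
definition val :: "nat set \<Rightarrow> (nat \<Rightarrow> real) \<Rightarrow> real" where
  "val I x = (\<Sum>s\<in>I. gfun (\<sigma>!s) (x s))"
definition opt :: "nat set \<Rightarrow> real" where
  "opt I = Sup {val I x | x. feas I x}"

lemma feas_bound: "finite I \<Longrightarrow> feas I x \<Longrightarrow> s \<in> I \<Longrightarrow> x s \<in> {0..D}"
  unfolding feas_def using member_le_sum[of s I x] by auto

lemma val_le: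
  assumes "I \<subseteq> {..<T}" "feas I x" "\<forall>s\<in>I. fst (\<sigma>!s) \<le> c" "0 \<le> c"
  shows "val I x \<le> c * D"
proof -
  have fin: "finite I" using assms(1) finite_subset by blast
  have "val I x \<le> (\<Sum>s\<in>I. fst (\<sigma>!s) * x s)"
    unfolding val_def
  proof (rule sum_mono)
    fix s assume s: "s \<in> I"
    then have "s < T" using assms(1) by auto
    from gpe_le[OF gpe_nth[OF this] feas_bound[OF fin assms(2) s]]
    show "gfun (\<sigma>!s) (x s) \<le> fst (\<sigma>!s) * x s" by simp
  qed
  also have "\<dots> \<le> (\<Sum>s\<in>I. c * x s)"
    using assms feas_bound[OF fin assms(2)] by (intro sum_mono mult_right_mono) auto
  also have "\<dots> = c * (\<Sum>s\<in>I. x s)" by (simp add: sum_distrib_left)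
  also have "\<dots> \<le> c * D" using assms(2,4) by (simp add: feas_def mult_left_mono)
  finally show ?thesis .
qed

lemma feas0: "feas I (\<lambda>_. 0)" using Dpos by (simp add: feas_def)
lemma val0: "val I (\<lambda>_. 0) = 0" by (simp add: val_def gfun_def)

lemma bdd: "I \<subseteq> {..<T} \<Longrightarrow> bdd_above {val I x | x. feas I x}"
proof -
  assume I: "I \<subseteq> {..<T}"
  have "\<forall>s\<in>I. fst (\<sigma>!s) \<le> M" using gpe_nth I by (auto simp: in_GPE_def)
  then show ?thesis using val_le[OF I] mM mpos
    by (intro bdd_aboveI[of _ "M*D"]) auto
qed

lemma opt_upper: "I \<subseteq> {..<T} \<Longrightarrow> feas I x \<Longrightarrow> val I x \<le> opt I"
  unfolding opt_def by (rule cSup_upper[OF _ bdd]) auto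

lemma opt_least: "(\<And>x. feas I x \<Longrightarrow> val I x \<le> B) \<Longrightarrow> opt I \<le> B"
  unfolding opt_def by (rule cSup_least) (use feas0 in auto)

lemma opt_nonneg: "I \<subseteq> {..<T} \<Longrightarrow> 0 \<le> opt I"
  using opt_upper[of I "\<lambda>_. 0"] feas0 val0 by simp

lemma opt_empty: "opt {} = 0"
proof -
  have "opt {} \<le> 0" by (rule opt_least) (simp add: val_def)
  then show ?thesis using opt_nonneg[of "{}"] by simp
qed

lemma opt_le_c: "I \<subseteq> {..<T} \<Longrightarrow> \<forall>s\<in>I. fst (\<sigma>!s) \<le> c \<Longrightarrow> 0 \<le> c \<Longrightarrow> opt I \<le> c * D"
  by (rule opt_least) (rule val_le)


lemma G_concave:
  assumes "s < T" "a \<in> {0..D}" "b \<in> {0..D}" "0 \<le> l" "l \<le> 1"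
  shows "gfun (\<sigma>!s) a + gfun (\<sigma>!s) b \<le>
     gfun (\<sigma>!s) ((1-l)*a + l*b) + gfun (\<sigma>!s) (l*a + (1-l)*b)"
proof -
  have g: "in_GPE D m M (fst (\<sigma>!s)) (snd (\<sigma>!s))" by (rule gpe_nth[OF assms(1)])
  have 1: "(1-l) * gfun (\<sigma>!s) a + l * gfun (\<sigma>!s) b \<le> gfun (\<sigma>!s) ((1-l)*a + l*b)"
    using gpe_concave[OF g assms(2,3,4,5)] by simp
  have 2: "(1-(1-l)) * gfun (\<sigma>!s) a + (1-l) * gfun (\<sigma>!s) b \<le> gfun (\<sigma>!s) ((1-(1-l))*a + (1-l)*b)"
    using gpe_concave[OF g assms(2,3), of "1-l"] assms by simp
  show ?thesis using 1 2 by (simp add: algebra_simps)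
qed

lemma exchange_pt:
  assumes A: "A \<subseteq> B" and B: "B \<subseteq> {..<T}" and t: "t < T" "t \<notin> B"
    and x: "feas (insert t B) x" and y: "feas A y"
  shows "val (insert t B) x + val A y \<le> opt (insert t A) + opt B"
proof -
  have finB: "finite B" using B finite_subset by blast
  have finA: "finite A" using A finB finite_subset by blast
  have tA: "t \<notin> A" using A t by auto
  define X where "X = (\<Sum>s\<in>A. x s)"
  define Y where "Y = (\<Sum>s\<in>A. y s)"
  define Dx where "Dx = (\<Sum>s\<in>B-A. x s)"
  have xb: "\<And>s. s \<in> insert t B \<Longrightarrow> x s \<in> {0..D}" using feas_bound[OF _ x] finB by auto
  have yb: "\<And>s. s \<in> A \<Longrightarrow> y s \<in> {0..D}" using feas_bound[OF finA y] by auto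
  have sumx: "(\<Sum>s\<in>insert t B. x s) = x t + X + Dx"
    using sum.insert[OF finB t(2), of x] sum.subset_diff[OF A finB, of x] unfolding X_def Dx_def by linarith
  have c1: "x t + X + Dx \<le> D" using x sumx by (simp add: feas_def)
  have Y0: "Y \<le> D" using y by (simp add: feas_def Y_def)
  have X0: "0 \<le> X" unfolding X_def using xb A by (intro sum_nonneg) auto
  have Dx0: "0 \<le> Dx" unfolding Dx_def using xb by (intro sum_nonneg) auto
  have xt0: "0 \<le> x t" using xb by auto
  obtain l where l: "0 \<le> l" "l \<le> 1" "x t + ((1-l)*X + l*Y) \<le> D" "l*X + (1-l)*Y + Dx \<le> D"
  proof (cases "Y \<le> X")
    case True
    show ?thesis by (rule that[of 0]) (use True c1 Dx0 xt0 in auto)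
  next
    case False
    define l where "l = max 0 ((Y - D + Dx)/(Y - X))"
    have YX: "0 < Y - X" using False by simp
    have l0: "0 \<le> l" by (simp add: l_def)
    have l1: "l \<le> 1" unfolding l_def using YX c1 xt0 by (auto simp: divide_le_eq)
    have lge: "Y - D + Dx \<le> l * (Y - X)" unfolding l_def using YX
      by (auto simp: divide_le_eq max_def zero_le_divide_iff)
    have lle: "l * (Y - X) \<le> max 0 (Y - D + Dx)" unfolding l_def using YX
      by (auto simp: max_def)
    have e1: "(1-l)*X + l*Y = X + l*(Y-X)" by (simp add: algebra_simps)
    have e2: "l*X + (1-l)*Y = Y - l*(Y-X)" by (simp add: algebra_simps)
    have gen: "\<And>q. q \<le> max 0 (Y - D + Dx) \<Longrightarrow> x t + (X + q) \<le> D"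
      using c1 Y0 Dx0 by (auto simp: max_def split: if_splits)
    have h3: "x t + ((1-l)*X + l*Y) \<le> D" unfolding e1 by (rule gen[OF lle])
    have h4: "l*X + (1-l)*Y + Dx \<le> D" unfolding e2 using lge by linarith
    show ?thesis
      by (rule that[of l]) (use l0 l1 h3 h4 in auto)
  qed
  define a1 where "a1 s = (1-l)*x s + l*y s" for s
  define a2 where "a2 s = l*x s + (1-l)*y s" for s
  define z1 where "z1 s = (if s = t then x t else a1 s)" for s
  define z2 where "z2 s = (if s \<in> A then a2 s else x s)" for s
  have a1b: "s \<in> A \<Longrightarrow> 0 \<le> a1 s" for s using xb[of s] yb[of s] A l by (auto simp: a1_def)
  have a2b: "s \<in> A \<Longrightarrow> 0 \<le> a2 s" for s using xb[of s] yb[of s] A l by (auto simp: a2_def)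
  have sa1: "(\<Sum>s\<in>A. a1 s) = (1-l)*X + l*Y"
    by (simp add: a1_def sum.distrib sum_distrib_left X_def Y_def)
  have sa2: "(\<Sum>s\<in>A. a2 s) = l*X + (1-l)*Y"
    by (simp add: a2_def sum.distrib sum_distrib_left X_def Y_def)
  have zA: "\<And>s. s \<in> A \<Longrightarrow> z1 s = a1 s" using tA by (auto simp: z1_def)
  have sz1: "(\<Sum>s\<in>insert t A. z1 s) = x t + (\<Sum>s\<in>A. a1 s)"
    using sum.insert[OF finA tA, of z1] sum.cong[OF refl zA, of A] by (simp add: z1_def)
  have "(\<Sum>s\<in>B. z2 s) = (\<Sum>s\<in>B-A. z2 s) + (\<Sum>s\<in>A. z2 s)"
    by (rule sum.subset_diff[OF A finB])
  also have "\<dots> = Dx + (\<Sum>s\<in>A. a2 s)" by (simp add: z2_def Dx_def)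
  finally have sz2: "(\<Sum>s\<in>B. z2 s) = Dx + (\<Sum>s\<in>A. a2 s)" .
  have f1: "feas (insert t A) z1"
    unfolding feas_def using sz1 sa1 l xt0 a1b tA by (auto simp: z1_def)
  have f2: "feas B z2"
    unfolding feas_def using sz2 sa2 l a2b xb by (auto simp: z2_def)
  have v1: "val (insert t A) z1 = gfun (\<sigma>!t) (x t) + (\<Sum>s\<in>A. gfun (\<sigma>!s) (a1 s))"
    unfolding val_def using sum.insert[OF finA tA, of "\<lambda>s. gfun (\<sigma>!s) (z1 s)"]
      sum.cong[OF refl, of A "\<lambda>s. gfun (\<sigma>!s) (z1 s)" "\<lambda>s. gfun (\<sigma>!s) (a1 s)"] zA
    by (simp add: z1_def)
  have "val B z2 = (\<Sum>s\<in>B-A. gfun (\<sigma>!s) (z2 s)) + (\<Sum>s\<in>A. gfun (\<sigma>!s) (z2 s))"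
    unfolding val_def by (rule sum.subset_diff[OF A finB])
  also have "\<dots> = (\<Sum>s\<in>B-A. gfun (\<sigma>!s) (x s)) + (\<Sum>s\<in>A. gfun (\<sigma>!s) (a2 s))"
    by (simp add: z2_def)
  finally have v2: "val B z2 = (\<Sum>s\<in>B-A. gfun (\<sigma>!s) (x s)) + (\<Sum>s\<in>A. gfun (\<sigma>!s) (a2 s))" .
  have vx: "val (insert t B) x = gfun (\<sigma>!t) (x t) + ((\<Sum>s\<in>B-A. gfun (\<sigma>!s) (x s)) + (\<Sum>s\<in>A. gfun (\<sigma>!s) (x s)))"
    unfolding val_def using sum.insert[OF finB t(2), of "\<lambda>s. gfun (\<sigma>!s) (x s)"]
      sum.subset_diff[OF A finB, of "\<lambda>s. gfun (\<sigma>!s) (x s)"] by simp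
  have conc: "(\<Sum>s\<in>A. gfun (\<sigma>!s) (x s)) + (\<Sum>s\<in>A. gfun (\<sigma>!s) (y s))
      \<le> (\<Sum>s\<in>A. gfun (\<sigma>!s) (a1 s)) + (\<Sum>s\<in>A. gfun (\<sigma>!s) (a2 s))"
    unfolding sum.distrib[symmetric]
  proof (rule sum_mono)
    fix s assume s: "s \<in> A"
    then have "s < T" using A B by auto
    from G_concave[OF this xb[of s] yb[OF s] l(1,2)] s A
    show "gfun (\<sigma>!s) (x s) + gfun (\<sigma>!s) (y s) \<le> gfun (\<sigma>!s) (a1 s) + gfun (\<sigma>!s) (a2 s)"
      by (auto simp: a1_def a2_def)
  qed
  have "val (insert t B) x + val A y \<le> val (insert t A) z1 + val B z2"
    using vx v1 v2 conc by (simp add: val_def)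
  also have "\<dots> \<le> opt (insert t A) + opt B"
    using opt_upper[OF _ f1] opt_upper[OF B f2] A B t by (intro add_mono) auto
  finally show ?thesis .
qed

end

lemma keyK:
  fixes a b Phi D m :: real
  assumes "0 < m" "m \<le> a" "a \<le> b" "0 \<le> Phi" "Phi \<le> D * a"
  shows "Phi/a + D * ln (a/m) \<le> Phi/b + D * ln (b/m)"
proof -
  have a0: "0 < a" using assms by simp
  have b0: "0 < b" using assms by simp
  have l: "ln (b/m) - ln (a/m) = ln (b/a)" using a0 b0 assms(1) by (simp add: ln_div)
  have "ln (a/b) \<le> a/b - 1" using a0 b0 by (intro ln_le_minus_one) simp
  moreover have "ln (b/a) = - ln (a/b)" using a0 b0 by (simp add: ln_div)
  ultimately have lb: "1 - a/b \<le> ln (b/a)" by simp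
  have "Phi/a - Phi/b = Phi * ((b - a)/(a*b))" using a0 b0 by (simp add: field_simps)
  also have "\<dots> \<le> (D*a) * ((b - a)/(a*b))"
    using assms a0 b0 by (intro mult_right_mono) auto
  also have "\<dots> = D * (1 - a/b)" using a0 b0 by (simp add: field_simps)
  also have "\<dots> \<le> D * ln (b/a)"
  proof -
    have "0 \<le> D" using assms a0 by (smt (verit) mult_nonneg_nonneg zero_le_mult_iff)
    then show ?thesis using lb by (simp add: mult_left_mono)
  qed
  finally show ?thesis using l by (simp add: algebra_simps)
qed

lemma harm:
  fixes I :: "nat set" and phi p :: "nat \<Rightarrow> real" and D m P :: real
  assumes "finite I" "\<forall>i\<in>I. 0 \<le> phi i" "\<forall>i\<in>I. m \<le> p i" "0 < m" "0 \<le> D"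
    "\<forall>c\<ge>m. (\<Sum>i\<in>{i\<in>I. p i \<le> c}. phi i) \<le> D * c"
    "\<forall>i\<in>I. p i \<le> P" "m \<le> P"
  shows "(\<Sum>i\<in>I. phi i / p i) \<le> (\<Sum>i\<in>I. phi i) / P + D * ln (P/m)"
  using assms
proof (induction "card I" arbitrary: I P rule: less_induct)
  case less
  show ?case
  proof (cases "I = {}")
    case True
    then show ?thesis using less.prems by simp
  next
    case False
    define ps where "ps = Max (p ` I)"
    have psI: "ps \<in> p ` I" unfolding ps_def using False less.prems(1) by simp
    have psge: "\<forall>i\<in>I. p i \<le> ps" unfolding ps_def using less.prems(1) by simp
    have psm: "m \<le> ps" using psI less.prems(3) by auto
    have psP: "ps \<le> P" using psI less.prems(7) by auto
    define I' where "I' = {i\<in>I. p i < ps}"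
    define Tp where "Tp = I - I'"
    have I'I: "I' \<subseteq> I" by (auto simp: I'_def)
    have finI': "finite I'" using less.prems(1) I'I finite_subset by blast
    have card: "card I' < card I"
    proof -
      obtain i where "i \<in> I" "p i = ps" using psI by auto
      then have "i \<notin> I'" by (auto simp: I'_def)
      then have "I' \<subset> I" using I'I \<open>i \<in> I\<close> by auto
      then show ?thesis using less.prems(1) by (simp add: psubset_card_mono)
    qed
    have TpP: "\<forall>i\<in>Tp. p i = ps" using psge by (auto simp: Tp_def I'_def)
    define P' where "P' = (if I' = {} then m else Max (p ` I'))"
    have P'm: "m \<le> P'"
    proof (cases "I' = {}")
      case False
      then obtain i where "i \<in> I'" by auto
      then have "p i \<le> Max (p ` I')" using finI' by simp
      moreover have "m \<le> p i" using \<open>i \<in> I'\<close> I'I less.prems(3) by auto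
      ultimately show ?thesis using False by (simp add: P'_def)
    qed (simp add: P'_def)
    have P'ge: "\<forall>i\<in>I'. p i \<le> P'" using finI' by (auto simp: P'_def)
    have P'ps: "P' \<le> ps"
    proof (cases "I' = {}")
      case False
      then have "Max (p ` I') \<in> p ` I'" using finI' by simp
      then show ?thesis using False by (auto simp: P'_def I'_def)
    qed (simp add: P'_def psm)
    have I'eq: "I' \<noteq> {} \<Longrightarrow> {i\<in>I. p i \<le> P'} = I'"
    proof
      assume ne: "I' \<noteq> {}"
      show "{i\<in>I. p i \<le> P'} \<subseteq> I'"
      proof
        fix i assume i: "i \<in> {i\<in>I. p i \<le> P'}"
        have "Max (p ` I') \<in> p ` I'" using finI' ne by simp
        then have "P' < ps" using ne by (auto simp: P'_def I'_def)
        then show "i \<in> I'" using i by (auto simp: I'_def)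
      qed
    qed (use P'ge I'I in auto)
    have h6': "\<forall>c\<ge>m. (\<Sum>i\<in>{i\<in>I'. p i \<le> c}. phi i) \<le> D * c"
    proof (intro allI impI)
      fix c assume c: "m \<le> c"
      have "(\<Sum>i\<in>{i\<in>I'. p i \<le> c}. phi i) \<le> (\<Sum>i\<in>{i\<in>I. p i \<le> c}. phi i)"
        using less.prems(1,2) I'I by (intro sum_mono2) auto
      also have "\<dots> \<le> D * c" using less.prems(6) c by auto
      finally show "(\<Sum>i\<in>{i\<in>I'. p i \<le> c}. phi i) \<le> D * c" .
    qed
    have IH: "(\<Sum>i\<in>I'. phi i / p i) \<le> (\<Sum>i\<in>I'. phi i) / P' + D * ln (P'/m)"
    proof -
      have a: "\<forall>i\<in>I'. 0 \<le> phi i" "\<forall>i\<in>I'. m \<le> p i" using less.prems(2,3) I'I by auto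
      show ?thesis using less.hyps[OF card, of P'] finI' less.prems(4,5) h6' P'ge P'm a by blast
    qed
    have Phi'le: "(\<Sum>i\<in>I'. phi i) \<le> D * P'"
    proof (cases "I' = {}")
      case True then show ?thesis using P'm less.prems(4,5) by simp
    next
      case False then show ?thesis using less.prems(6) P'm I'eq by force
    qed
    have Phi'0: "0 \<le> (\<Sum>i\<in>I'. phi i)" using less.prems(2) I'I by (intro sum_nonneg) auto
    have K1: "(\<Sum>i\<in>I'. phi i) / P' + D * ln (P'/m) \<le> (\<Sum>i\<in>I'. phi i) / ps + D * ln (ps/m)"
      by (rule keyK[OF less.prems(4) P'm P'ps Phi'0 Phi'le])
    have splitI: "I = I' \<union> Tp" "I' \<inter> Tp = {}" using I'I by (auto simp: Tp_def)
    have finTp: "finite Tp" using less.prems(1) by (simp add: Tp_def)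
    have sTp: "(\<Sum>i\<in>Tp. phi i / p i) = (\<Sum>i\<in>Tp. phi i) / ps"
      using TpP by (simp add: sum_divide_distrib)
    have "(\<Sum>i\<in>I. phi i / p i) = (\<Sum>i\<in>I'. phi i / p i) + (\<Sum>i\<in>Tp. phi i / p i)"
      using splitI finI' finTp by (simp add: sum.union_disjoint)
    also have "\<dots> \<le> (\<Sum>i\<in>I'. phi i) / ps + D * ln (ps/m) + (\<Sum>i\<in>Tp. phi i) / ps"
      using IH K1 sTp by simp
    also have "\<dots> = (\<Sum>i\<in>I. phi i) / ps + D * ln (ps/m)"
      using splitI finI' finTp by (simp add: sum.union_disjoint add_divide_distrib)
    also have "\<dots> \<le> (\<Sum>i\<in>I. phi i) / P + D * ln (P/m)"
    proof (rule keyK[OF less.prems(4) psm psP])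
      show "0 \<le> (\<Sum>i\<in>I. phi i)" using less.prems(2) by (intro sum_nonneg) auto
      have "{i\<in>I. p i \<le> ps} = I" using psge by auto
      then show "(\<Sum>i\<in>I. phi i) \<le> D * ps" using less.prems(6) psm by metis
    qed
    finally show ?thesis .
  qed
qed


lemma single_root:
  assumes g: "in_GPE D m M p f" and D0: "0 < D" and m0: "0 < m"
    and w: "w \<in> {0..D}" and phi0: "0 \<le> phi" and phiw: "phi \<le> gfun (p,f) w" and pi1: "1 \<le> ppi"
  shows "\<exists>v\<in>{0..D}. gfun (p,f) v = phi/ppi \<and> v \<le> 2*(phi/ppi)/(p*(1+sqrt(1-1/ppi)))"
proof -
  define c where "c = phi/ppi"
  define G where "G = gfun (p,f)"
  have c0: "0 \<le> c" using phi0 pi1 by (simp add: c_def)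
  have pic: "ppi * c = phi" using pi1 by (simp add: c_def)
  have cG: "c \<le> G w"
  proof -
    have "c \<le> ppi * c" using c0 pi1 by (simp add: mult_le_cancel_right1)
    then show ?thesis using pic phiw by (simp add: G_def)
  qed
  have p0: "0 < p" using g m0 by (auto simp: in_GPE_def)
  have cont: "continuous_on {0..D} G" unfolding G_def by (rule gpe_cont[OF g])
  have G0: "G 0 = 0" by (simp add: G_def gfun_def)
  define ss where "ss = sqrt (1 - 1/ppi)"
  have ss0: "0 \<le> ss" using pi1 by (simp add: ss_def)
  have ivt: "\<And>b. b \<in> {0..D} \<Longrightarrow> c \<le> G b \<Longrightarrow> \<exists>v. 0 \<le> v \<and> v \<le> b \<and> G v = c"
  proof -
    fix b assume b: "b \<in> {0..D}" "c \<le> G b"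
    have "continuous_on {0..b} G" using b by (intro continuous_on_subset[OF cont]) auto
    then show "\<exists>v. 0 \<le> v \<and> v \<le> b \<and> G v = c" using IVT'[of G 0 c b] b G0 c0 by auto
  qed
  show ?thesis
  proof (cases "w = 0")
    case True
    then have "c = 0" using cG G0 c0 by simp
    then show ?thesis using G0 D0 by (auto simp: c_def[symmetric] G_def[symmetric])
  next
    case False
    then have w0: "0 < w" using w by simp
    define kk where "kk = f w / w"
    have fw0: "0 \<le> f w" using g w by (auto simp: in_GPE_def)
    have kk0: "0 \<le> kk" using fw0 w0 by (simp add: kk_def)
    have Gw: "G w = p*w - kk*w^2" using w0 by (simp add: G_def gfun_def kk_def power2_eq_square algebra_simps)
    have hq: "\<And>u. 0 \<le> u \<Longrightarrow> u \<le> w \<Longrightarrow> p*u - kk*(u*u) \<le> G u"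
    proof -
      fix u assume u: "0 \<le> u" "u \<le> w"
      have "f u \<le> (u/w) * f w" using gpe_f_le[OF g u] w w0 by auto
      then have "f u \<le> kk * u" by (simp add: kk_def mult.commute)
      then have "f u * u \<le> kk * u * u" using u by (simp add: mult_right_mono)
      then show "p*u - kk*(u*u) \<le> G u" by (simp add: G_def gfun_def power2_eq_square algebra_simps)
    qed
    have hK: "4*kk*G w \<le> p^2"
    proof -
      have "0 \<le> (p - 2*kk*w)^2" by simp
      then show ?thesis unfolding Gw by (simp add: power2_eq_square algebra_simps)
    qed
    have h4: "4*kk*c \<le> p^2/ppi"
    proof -
      have "ppi * (4*kk*c) = 4*kk*phi" using pic by (simp add: algebra_simps)
      also have "\<dots> \<le> 4*kk*G w" using phiw kk0 by (simp add: G_def mult_left_mono)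
      also have "\<dots> \<le> p^2" by (rule hK)
      finally have "ppi * (4*kk*c) \<le> p^2" .
      then show ?thesis using pi1 by (simp add: le_divide_eq mult.commute)
    qed
    have disc: "p^2*(1 - 1/ppi) \<le> p^2 - 4*kk*c" using h4 by (simp add: algebra_simps)
    have nn: "0 \<le> p^2*(1 - 1/ppi)" using pi1 by simp
    define Dd where "Dd = sqrt (p^2 - 4*kk*c)"
    have Dd2: "Dd^2 = p^2 - 4*kk*c" unfolding Dd_def using disc nn by simp
    have Dd0: "0 \<le> Dd" unfolding Dd_def using disc nn by simp
    have Dds: "p * ss \<le> Dd"
    proof -
      have "sqrt (p^2*(1 - 1/ppi)) \<le> Dd" unfolding Dd_def using disc by (rule real_sqrt_le_mono)
      moreover have "sqrt (p^2*(1 - 1/ppi)) = p * ss" using p0 by (simp add: ss_def real_sqrt_mult)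
      ultimately show ?thesis by simp
    qed
    define r where "r = 2*c/(p+Dd)"
    have pD: "0 < p + Dd" using p0 Dd0 by simp
    have r0: "0 \<le> r" using c0 pD by (simp add: r_def)
    have rb: "r \<le> 2*c/(p*(1+ss))"
    proof -
      have a: "p*(1+ss) \<le> p + Dd" using Dds by (simp add: algebra_simps)
      have b: "0 < p*(1+ss)" using p0 ss0 by simp
      have "0 \<le> 2*c" using c0 by simp
      from divide_left_mono[OF a this mult_pos_pos[OF pD b]] show ?thesis by (simp add: r_def)
    qed
    have root: "p*r - kk*r^2 = c"
    proof -
      have e: "r*(p+Dd) = 2*c" unfolding r_def using pD by simp
      have "(p*r - kk*r^2 - c) * (p+Dd)^2 = p*(r*(p+Dd))*(p+Dd) - kk*(r*(p+Dd))^2 - c*(p+Dd)^2"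
        by (simp add: power2_eq_square algebra_simps)
      also have "\<dots> = p*(2*c)*(p+Dd) - kk*(2*c)^2 - c*(p+Dd)^2" using e by simp
      also have "\<dots> = c * (p^2 - Dd^2 - 4*kk*c)" by (simp add: power2_eq_square algebra_simps)
      finally have "(p*r - kk*r^2 - c) * (p+Dd)^2 = c * (p^2 - Dd^2 - 4*kk*c)" .
      also have "\<dots> = 0" using Dd2 by simp
      finally show ?thesis using pD by simp
    qed
    have "\<exists>v. 0 \<le> v \<and> v \<le> r \<and> v \<le> D \<and> G v = c"
    proof (cases "r \<le> w")
      case True
      have "c \<le> G r" using hq[OF r0 True] root by (simp add: power2_eq_square)
      then show ?thesis using ivt[of r] r0 True w by fastforce
    next
      case False
      then show ?thesis using ivt[of w] w cG by fastforce
    qed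
    then obtain v where v: "0 \<le> v" "v \<le> r" "v \<le> D" "G v = c" by blast
    show ?thesis
      using v rb by (intro bexI[of _ v]) (auto simp: G_def c_def ss_def)
  qed
qed


context crp begin

lemma opt_mono:
  assumes "A \<subseteq> B" "B \<subseteq> {..<T}"
  shows "opt A \<le> opt B"
proof (rule opt_least)
  fix x assume x: "feas A x"
  have finB: "finite B" using assms(2) finite_subset by blast
  define x' where "x' s = (if s \<in> A then x s else 0)" for s
  have s1: "(\<Sum>s\<in>B. x' s) = (\<Sum>s\<in>A. x s)"
  proof -
    have "(\<Sum>s\<in>B. x' s) = (\<Sum>s\<in>A. x' s)"
      by (rule sum.mono_neutral_right[OF finB assms(1)]) (auto simp: x'_def)
    then show ?thesis by (simp add: x'_def)
  qed
  have s2: "val B x' = val A x"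
  proof -
    have "val B x' = (\<Sum>s\<in>A. gfun (\<sigma>!s) (x' s))" unfolding val_def
      by (rule sum.mono_neutral_right[OF finB assms(1)]) (auto simp: x'_def gfun_def)
    then show ?thesis by (simp add: x'_def val_def)
  qed
  have "feas B x'" using x s1 by (auto simp: feas_def x'_def)
  then show "val A x \<le> opt B" using opt_upper[OF assms(2)] s2 by metis
qed

lemma exchange:
  assumes A: "A \<subseteq> B" and B: "B \<subseteq> {..<T}" and t: "t < T" "t \<notin> B"
  shows "opt (insert t B) + opt A \<le> opt (insert t A) + opt B"
proof -
  have "opt (insert t B) \<le> opt (insert t A) + opt B - opt A"
  proof (rule opt_least)
    fix x assume x: "feas (insert t B) x"
    have "opt A \<le> opt (insert t A) + opt B - val (insert t B) x"
    proof (rule opt_least)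
      fix y assume y: "feas A y"
      show "val A y \<le> opt (insert t A) + opt B - val (insert t B) x"
        using exchange_pt[OF A B t x y] by simp
    qed
    then show "val (insert t B) x \<le> opt (insert t A) + opt B - opt A" by simp
  qed
  then show ?thesis by simp
qed

definition phi :: "nat \<Rightarrow> real" where
  "phi s = opt {..<Suc s} - opt {..<s}"

lemma phi_nonneg: "s < T \<Longrightarrow> 0 \<le> phi s"
  unfolding phi_def using opt_mono[of "{..<s}" "{..<Suc s}"] by auto

lemma phi_single: assumes "s < T" shows "\<exists>w\<in>{0..D}. phi s \<le> gfun (\<sigma>!s) w"
proof -
  have g: "in_GPE D m M (fst (\<sigma>!s)) (snd (\<sigma>!s))" by (rule gpe_nth[OF assms])
  have "continuous_on {0..D} (gfun (\<sigma>!s))" using gpe_cont[OF g] by simp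
  then obtain w where w: "w \<in> {0..D}" "\<forall>y\<in>{0..D}. gfun (\<sigma>!s) y \<le> gfun (\<sigma>!s) w"
    using continuous_attains_sup[of "{0..D}" "gfun (\<sigma>!s)"] Dpos by auto
  have ex: "opt (insert s {..<s}) + opt {} \<le> opt (insert s {}) + opt {..<s}"
    by (rule exchange) (use assms in auto)
  have "opt {s} \<le> gfun (\<sigma>!s) w"
  proof (rule opt_least)
    fix x assume "feas {s} x"
    then have "x s \<in> {0..D}" using feas_bound[of "{s}" x s] by simp
    then show "val {s} x \<le> gfun (\<sigma>!s) w" using w by (simp add: val_def)
  qed
  moreover have "insert s {..<s} = {..<Suc s}" by auto
  ultimately have "phi s \<le> gfun (\<sigma>!s) w" using ex opt_empty by (simp add: phi_def)
  then show ?thesis using w by auto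
qed

lemma phi_sum_le:
  assumes c: "0 \<le> c"
  shows "(\<Sum>s\<in>{s. s < T \<and> fst (\<sigma>!s) \<le> c}. phi s) \<le> c * D"
proof -
  have "n \<le> T \<Longrightarrow> (\<Sum>s\<in>{s. s < n \<and> fst (\<sigma>!s) \<le> c}. phi s) \<le> opt {s. s < n \<and> fst (\<sigma>!s) \<le> c}" for n
  proof (induction n)
    case 0
    then show ?case using opt_empty by simp
  next
    case (Suc n)
    define A where "A = {s. s < n \<and> fst (\<sigma>!s) \<le> c}"
    have nT: "n < T" using Suc by simp
    have IH: "(\<Sum>s\<in>A. phi s) \<le> opt A" using Suc by (simp add: A_def)
    show ?case
    proof (cases "fst (\<sigma>!n) \<le> c")
      case True
      have eq: "{s. s < Suc n \<and> fst (\<sigma>!s) \<le> c} = insert n A" using True by (auto simp: A_def)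
      have finA: "finite A" by (simp add: A_def)
      have nA: "n \<notin> A" by (simp add: A_def)
      have ex: "opt (insert n {..<n}) + opt A \<le> opt (insert n A) + opt {..<n}"
        by (rule exchange) (use nT in \<open>auto simp: A_def\<close>)
      have "insert n {..<n} = {..<Suc n}" by auto
      then have "phi n \<le> opt (insert n A) - opt A" using ex by (simp add: phi_def)
      then show ?thesis unfolding eq using IH sum.insert[OF finA nA, of phi] by simp
    next
      case False
      have eq: "{s. s < Suc n \<and> fst (\<sigma>!s) \<le> c} = A" using False by (auto simp: A_def less_Suc_eq)
      show ?thesis unfolding eq by (rule IH)
    qed
  qed
  then have "(\<Sum>s\<in>{s. s < T \<and> fst (\<sigma>!s) \<le> c}. phi s) \<le> opt {s. s < T \<and> fst (\<sigma>!s) \<le> c}" by simp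
  also have "\<dots> \<le> c * D" by (rule opt_le_c) (use c in auto)
  finally show ?thesis .
qed

lemma eta_eq: "k \<le> T \<Longrightarrow> etaOPT D (take k \<sigma>) = opt {..<k}"
proof -
  assume k: "k \<le> T"
  have "{(\<Sum>s<length (take k \<sigma>). gfun (take k \<sigma> ! s) (x s)) | x.
       (\<forall>s<length (take k \<sigma>). 0 \<le> x s) \<and> (\<Sum>s<length (take k \<sigma>). x s) \<le> D}
     = {val {..<k} x | x. feas {..<k} x}"
    using k by (simp add: val_def feas_def min_def Ball_def lessThan_iff)
  then show ?thesis by (simp add: etaOPT_def opt_def)
qed

lemma crp_bound:
  assumes s: "s < T" and pi1: "1 \<le> ppi"
  shows "crp_out D ppi \<sigma> (Suc s) \<le> 2*(phi s/ppi)/(fst (\<sigma>!s)*(1+sqrt(1-1/ppi)))"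
proof -
  have g: "in_GPE D m M (fst (\<sigma>!s)) (snd (\<sigma>!s))" by (rule gpe_nth[OF s])
  obtain w where w: "w \<in> {0..D}" "phi s \<le> gfun (\<sigma>!s) w" using phi_single[OF s] by blast
  obtain v where v: "v \<in> {0..D}" "gfun (\<sigma>!s) v = phi s/ppi"
      "v \<le> 2*(phi s/ppi)/(fst (\<sigma>!s)*(1+sqrt(1-1/ppi)))"
    using single_root[OF g Dpos mpos w(1) phi_nonneg[OF s], of ppi] w(2) pi1 by auto
  have e1: "etaOPT D (take (Suc s) \<sigma>) = opt {..<Suc s}" using s by (intro eta_eq) simp
  have e2: "etaOPT D (take s \<sigma>) = opt {..<s}" using s by (intro eta_eq) simp
  have "crp_out D ppi \<sigma> (Suc s) = Inf {u \<in> {0..D}. gfun (\<sigma>!s) u = phi s / ppi}"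
    unfolding crp_out_def using e1 e2 by (simp add: phi_def)
  also have "\<dots> \<le> v" by (rule cInf_lower) (use v in auto)
  finally show ?thesis using v(3) by simp
qed

lemma total:
  assumes pi1: "1 \<le> ppi"
  shows "(\<Sum>t=1..T. crp_out D ppi \<sigma> t) \<le> 2 * D / (ppi * (1 + sqrt (1 - 1 / ppi))) * (ln (M / m) + 1)"
proof -
  define k where "k = 2/(ppi*(1+sqrt(1-1/ppi)))"
  have k0: "0 \<le> k" using pi1 by (simp add: k_def)
  have "(\<Sum>t=1..T. crp_out D ppi \<sigma> t) = (\<Sum>s<T. crp_out D ppi \<sigma> (Suc s))"
    using sum.atLeast1_atMost_eq[of "crp_out D ppi \<sigma>" T] by simp
  also have "\<dots> \<le> (\<Sum>s<T. k * (phi s / fst (\<sigma>!s)))"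
  proof (rule sum_mono)
    fix s assume "s \<in> {..<T}"
    then have "s < T" by simp
    from crp_bound[OF this pi1] show "crp_out D ppi \<sigma> (Suc s) \<le> k * (phi s / fst (\<sigma>!s))"
      by (simp add: k_def field_simps)
  qed
  also have "\<dots> = k * (\<Sum>s\<in>{..<T}. phi s / fst (\<sigma>!s))" by (simp add: sum_distrib_left)
  also have "\<dots> \<le> k * ((\<Sum>s\<in>{..<T}. phi s) / M + D * ln (M/m))"
  proof (rule mult_left_mono[OF _ k0])
    show "(\<Sum>s\<in>{..<T}. phi s / fst (\<sigma>!s)) \<le> (\<Sum>s\<in>{..<T}. phi s) / M + D * ln (M/m)"
    proof (rule harm)
      show "\<forall>c\<ge>m. (\<Sum>i\<in>{i \<in> {..<T}. fst (\<sigma>!i) \<le> c}. phi i) \<le> D * c"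
      proof (intro allI impI)
        fix c assume "m \<le> c"
        then have "0 \<le> c" using mpos by simp
        from phi_sum_le[OF this] show "(\<Sum>i\<in>{i \<in> {..<T}. fst (\<sigma>!i) \<le> c}. phi i) \<le> D * c"
          by (simp add: mult.commute)
      qed
    qed (use phi_nonneg gpe_nth mpos Dpos mM in \<open>auto simp: in_GPE_def\<close>)
  qed
  also have "\<dots> \<le> k * (D + D * ln (M/m))"
  proof (rule mult_left_mono[OF _ k0])
    have "(\<Sum>s\<in>{..<T}. phi s) = (\<Sum>s\<in>{s. s < T \<and> fst (\<sigma>!s) \<le> M}. phi s)"
      using gpe_nth by (intro sum.cong) (auto simp: in_GPE_def)
    also have "\<dots> \<le> M * D" using phi_sum_le[of M] mpos mM by simp
    finally have "(\<Sum>s\<in>{..<T}. phi s) / M \<le> D" using mpos mM by (simp add: divide_le_eq mult.commute)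
    then show "(\<Sum>s\<in>{..<T}. phi s) / M + D * ln (M/m) \<le> D + D * ln (M/m)" by simp
  qed
  also have "\<dots> = 2 * D / (ppi * (1 + sqrt (1 - 1 / ppi))) * (ln (M / m) + 1)"
    by (simp add: k_def algebra_simps)
  finally show ?thesis .
qed

end

theorem lemma15:
  fixes Delta m M ppi :: real
  assumes "0 < Delta" and "0 < m" and "m \<le> M" and "1 \<le> ppi"
  shows "Phi Delta m M ppi \<le>
    ereal (2 * Delta / (ppi * (1 + sqrt (1 - 1 / ppi))) * (ln (M / m) + 1))"
  unfolding Phi_def
proof (rule SUP_least)
  fix \<sigma> assume "\<sigma> \<in> {\<sigma>. \<sigma> \<noteq> [] \<and> (\<forall>(p, f) \<in> set \<sigma>. in_GPE Delta m M p f)}"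
  then have "crp Delta m M \<sigma>" using assms by (unfold_locales) auto
  from crp.total[OF this assms(4)]
  show "ereal (\<Sum>t=1..length \<sigma>. crp_out Delta ppi \<sigma> t)
      \<le> ereal (2 * Delta / (ppi * (1 + sqrt (1 - 1 / ppi))) * (ln (M / m) + 1))" by simp
qed

end
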